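(* For real $m,p>-1$, $$\int_{0}^{1}\frac{x^m-x^p}{(x^{m+1}+1)(x^{p+1}+1)\log x}\,dx=\frac12\log\!\left(\frac{m+1}{p+1}\right).$$ *)

theory Defs
  imports "HOL-Analysis.Analysis"
begin

end

theory Submission
  imports Defs
begin

lemma main_aux:
  fixes m p :: real
  assumes mp: "m > -1" "p > -1" "p \<le> m"
  shows "((\<lambda>x. (x powr m - x powr p) /
            ((x powr (m + 1) + 1) * (x powr (p + 1) + 1) * ln x))
          has_integral (1/2) * ln ((m + 1) / (p + 1))) {0<..<1}"
proof -
  define a where "a = m + 1"
  define b where "b = p + 1"
  have a0: "a > 0" and b0: "b > 0" and ba: "b \<le> a" using mp by (auto simp: a_def b_def)
  define h where "h = (\<lambda>x::real. (x powr m - x powr p) /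
            ((x powr (m + 1) + 1) * (x powr (p + 1) + 1) * ln x))"
  define w where "w = (\<lambda>y::real. 1 / (1 + y))"
  define \<psi> where "\<psi> = (\<lambda>y::real. w y / (y * ln y))"
  define L where "L = (\<lambda>y::real. ln (- ln y))"
  have contpsi: "isCont \<psi> y" if "0 < y" "y < 1" for y
    using that unfolding \<psi>_def w_def by (auto intro!: continuous_intros)
  obtain G where G: "\<And>y. 0 < y \<Longrightarrow> y < 1 \<Longrightarrow> (G has_real_derivative \<psi> y) (at y)"
  proof -
    have "\<exists>F. \<forall>x :: real. ereal 0 < x \<longrightarrow> x < ereal 1 \<longrightarrow> (F has_vector_derivative \<psi> x) (at x)"
      by (rule einterval_antiderivative) (auto intro: contpsi)
    then show ?thesis using that by (auto simp: has_real_derivative_iff_has_vector_derivative)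
  qed
  have L: "(L has_real_derivative 1 / (y * ln y)) (at y)" if "0 < y" "y < 1" for y
  proof -
    have "ln y < 0" using that by simp
    show ?thesis unfolding L_def using that \<open>ln y < 0\<close>
      by (auto intro!: derivative_eq_intros simp: field_simps)
  qed
  define F where "F = (\<lambda>x. G (x powr b) - G (x powr a))"
  have dcomp: "((\<lambda>x. G (x powr c)) has_real_derivative 1 / (x * ln x * (1 + x powr c))) (at x)"
    if "0 < x" "x < 1" "c > 0" for x c
  proof -
    have xc: "0 < x powr c" "x powr c < 1" using that powr_less_mono2[of c x 1] by auto
    have "((\<lambda>x. G (x powr c)) has_real_derivative \<psi> (x powr c) * (c * x powr (c - 1))) (at x)"
      by (rule DERIV_chain2[of G _ "\<lambda>x. x powr c", OF G[OF xc]]) (rule has_real_derivative_powr[OF that(1)])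
    moreover have "\<psi> (x powr c) * (c * x powr (c - 1)) = 1 / (x * ln x * (1 + x powr c))"
    proof -
      have l: "ln x \<noteq> 0" using that by simp
      have e: "(1/(1+X))/(X*(c*l))*(c*(X/x)) = 1/(x*l*(1+X))" if "X > 0" "l \<noteq> 0" for X l
      proof -
        have "1 + X \<noteq> 0" using \<open>X > 0\<close> by simp
        with that \<open>c > 0\<close> \<open>x > 0\<close> show ?thesis by (simp add: divide_simps)
      qed
      show ?thesis using that xc e[OF xc(1) l] xc(1) by (simp add: \<psi>_def w_def ln_powr powr_diff)
    qed
    ultimately show ?thesis by simp
  qed
  have dF: "(F has_real_derivative h x) (at x)" if "0 < x" "x < 1" for x
  proof -
    have "(F has_real_derivative 1 / (x * ln x * (1 + x powr b)) - 1 / (x * ln x * (1 + x powr a))) (at x)"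
      unfolding F_def by (intro DERIV_diff dcomp that a0 b0)
    moreover have "1 / (x * ln x * (1 + x powr b)) - 1 / (x * ln x * (1 + x powr a)) = h x"
    proof -
      have pm: "x powr m = x powr (m+1) / x" "x powr p = x powr (p+1) / x"
        using that by (simp_all add: powr_add)
      have hx: "h x = (x powr a / x - x powr b / x)/((x powr a + 1)*(x powr b+1)*ln x)"
        unfolding h_def a_def b_def by (simp only: pm)
      have e: "(A/x - B/x)/((A+1)*(B+1)*l) = 1/(x*l*(1+B)) - 1/(x*l*(1+A))"
        if "A > 0" "B > 0" "l \<noteq> 0" for A B l
      proof -
        have "1 + A \<noteq> 0" "1 + B \<noteq> 0" "A + 1 \<noteq> 0" "B + 1 \<noteq> 0" using that by auto
        with that \<open>x > 0\<close> show ?thesis by (simp add: divide_simps) (simp add: algebra_simps)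
      qed
      have "ln x \<noteq> 0" using that by simp
      moreover have "0 < x powr a" "0 < x powr b" using that by auto
      ultimately show ?thesis using e hx by simp
    qed
    ultimately show ?thesis by simp
  qed
  have dK: "((\<lambda>y. G y - k * L y) has_real_derivative \<psi> y - k * (1 / (y * ln y))) (at y)"
    if "0 < y" "y < 1" for y k
    by (intro DERIV_diff DERIV_cmult G L that)
  have psiK: "\<psi> y - k * (1 / (y * ln y)) = (w y - k) / (y * ln y)" for y k
    unfolding \<psi>_def by (simp add: diff_divide_distrib)
  have yln: "y * ln y < 0" if "0 < y" "y < 1" for y :: real
    using that by (intro mult_pos_neg) auto
  have contK: "continuous_on {u..v} (\<lambda>y. G y - k * L y)" if "0 < u" "v < 1" for u v k
    using that by (intro continuous_at_imp_continuous_on ballI DERIV_isCont[OF dK]) auto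
  have wmono: "w y \<le> w z" if "0 \<le> z" "z \<le> y" for y z
    using that unfolding w_def by (intro divide_left_mono) auto
  have bnd: "w u * (L v - L u) \<le> G v - G u \<and> G v - G u \<le> w v * (L v - L u)"
    if uv: "0 < u" "u \<le> v" "v < 1" for u v
  proof
    have "(\<lambda>y. G y - w u * L y) u \<le> (\<lambda>y. G y - w u * L y) v"
    proof (rule DERIV_nonneg_imp_increasing_open[OF uv(2)])
      fix y assume y: "u < y" "y < v"
      show "\<exists>d. ((\<lambda>y. G y - w u * L y) has_real_derivative d) (at y) \<and> 0 \<le> d"
      proof (intro exI conjI)
        show "((\<lambda>y. G y - w u * L y) has_real_derivative \<psi> y - w u * (1 / (y * ln y))) (at y)"
          using y uv by (intro dK) auto
        have "0 \<le> (w y - w u) / (y * ln y)"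
          using y uv wmono[of u y] yln[of y] by (intro divide_nonpos_neg) auto
        then show "0 \<le> \<psi> y - w u * (1 / (y * ln y))" by (simp only: psiK)
      qed
    qed (rule contK[OF uv(1,3)])
    then show "w u * (L v - L u) \<le> G v - G u" by (simp add: algebra_simps)
  next
    have "(\<lambda>y. G y - w v * L y) u \<ge> (\<lambda>y. G y - w v * L y) v"
    proof (rule DERIV_nonpos_imp_decreasing_open[OF uv(2)])
      fix y assume y: "u < y" "y < v"
      show "\<exists>d. ((\<lambda>y. G y - w v * L y) has_real_derivative d) (at y) \<and> d \<le> 0"
      proof (intro exI conjI)
        show "((\<lambda>y. G y - w v * L y) has_real_derivative \<psi> y - w v * (1 / (y * ln y))) (at y)"
          using y uv by (intro dK) auto
        have "(w y - w v) / (y * ln y) \<le> 0"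
          using y uv wmono[of y v] yln[of y] by (intro divide_nonneg_neg) auto
        then show "\<psi> y - w v * (1 / (y * ln y)) \<le> 0" by (simp only: psiK)
      qed
    qed (rule contK[OF uv(1,3)])
    then show "G v - G u \<le> w v * (L v - L u)" by (simp add: algebra_simps)
  qed
  define c where "c = ln (b / a)"
  have Lpow: "L (x powr b) - L (x powr a) = c" if "0 < x" "x < 1" for x :: real
  proof -
    have l: "- ln x > 0" using that by simp
    have "- (b * ln x) = b * (- ln x)" "- (a * ln x) = a * (- ln x)" by simp_all
    then show ?thesis using that a0 b0 l
      by (simp only: L_def c_def ln_powr ln_mult ln_div) simp
  qed
  have Fb: "w (x powr a) * c \<le> F x \<and> F x \<le> w (x powr b) * c" if "0 < x" "x < 1" for x
  proof -
    have "x powr a \<le> x powr b" using that ba by (intro powr_mono') auto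
    moreover have "x powr b < 1" using that b0 powr_less_mono2[of b x 1] by auto
    ultimately show ?thesis using bnd[of "x powr a" "x powr b"] Lpow[OF that] that
      by (simp add: F_def)
  qed
  have wlim0: "((\<lambda>x. w (x powr d)) \<longlongrightarrow> 1) (at_right 0)" if "d > 0" for d
  proof -
    have "((\<lambda>x::real. x powr d) \<longlongrightarrow> 0) (at_right 0)"
      by (rule tendsto_zero_powrI[OF tendsto_ident_at tendsto_const _ that])
         (auto simp: eventually_at_right_field intro: exI[of _ 1])
    then have "((\<lambda>x. 1 / (1 + x powr d)) \<longlongrightarrow> 1 / (1 + 0)) (at_right 0)"
      by (intro tendsto_intros) auto
    then show ?thesis by (simp add: w_def)
  qed
  have wlim1: "((\<lambda>x. w (x powr d)) \<longlongrightarrow> 1/2) (at_left 1)" for d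
  proof -
    have "((\<lambda>x::real. x powr d) \<longlongrightarrow> 1 powr d) (at_left 1)"
      by (rule tendsto_powr[OF tendsto_ident_at tendsto_const]) auto
    then have "((\<lambda>x. 1 / (1 + x powr d)) \<longlongrightarrow> 1 / (1 + 1)) (at_left 1)"
      by (intro tendsto_intros) auto
    then show ?thesis by (simp add: w_def)
  qed
  have ev0: "eventually (\<lambda>x. 0 < x \<and> x < 1) (at_right (0::real))"
    by (auto simp: eventually_at_right_field intro: exI[of _ 1])
  have ev1: "eventually (\<lambda>x. 0 < x \<and> x < 1) (at_left (1::real))"
    by (auto simp: eventually_at_left_field intro: exI[of _ 0])
  have F0: "(F \<longlongrightarrow> c) (at_right 0)"
  proof (rule tendsto_sandwich)
    show "\<forall>\<^sub>F x in at_right 0. w (x powr a) * c \<le> F x"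
      using ev0 by eventually_elim (use Fb in auto)
    show "\<forall>\<^sub>F x in at_right 0. F x \<le> w (x powr b) * c"
      using ev0 by eventually_elim (use Fb in auto)
    show "((\<lambda>x. w (x powr a) * c) \<longlongrightarrow> c) (at_right 0)"
      using tendsto_mult_right[OF wlim0[OF a0], of c] by simp
    show "((\<lambda>x. w (x powr b) * c) \<longlongrightarrow> c) (at_right 0)"
      using tendsto_mult_right[OF wlim0[OF b0], of c] by simp
  qed
  have F1: "(F \<longlongrightarrow> 1/2 * c) (at_left 1)"
  proof (rule tendsto_sandwich)
    show "\<forall>\<^sub>F x in at_left 1. w (x powr a) * c \<le> F x"
      using ev1 by eventually_elim (use Fb in auto)
    show "\<forall>\<^sub>F x in at_left 1. F x \<le> w (x powr b) * c"
      using ev1 by eventually_elim (use Fb in auto)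
    show "((\<lambda>x. w (x powr a) * c) \<longlongrightarrow> 1/2 * c) (at_left 1)"
      using tendsto_mult_right[OF wlim1[of a], of c] by simp
    show "((\<lambda>x. w (x powr b) * c) \<longlongrightarrow> 1/2 * c) (at_left 1)"
      using tendsto_mult_right[OF wlim1[of b], of c] by simp
  qed
  have hcont: "isCont h x" if "0 < x" "x < 1" for x
  proof -
    have "ln x \<noteq> 0" using that by simp
    moreover have "x powr (m+1) + 1 \<noteq> 0" "x powr (p+1) + 1 \<noteq> 0"
      using powr_ge_zero[of x "m+1"] powr_ge_zero[of x "p+1"] by linarith+
    ultimately show ?thesis using that unfolding h_def
      by (intro continuous_intros) auto
  qed
  have hnn: "0 \<le> h x" if "0 < x" "x < 1" for x
  proof -
    have "x powr m - x powr p \<le> 0" using that mp by (simp add: powr_mono')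
    moreover have "0 < x powr (m+1)" "0 < x powr (p+1)" using that by auto
    moreover have "ln x < 0" using that by simp
    ultimately show ?thesis unfolding h_def
      by (intro divide_nonpos_neg mult_pos_neg mult_pos_pos) (auto simp: add_pos_pos)
  qed
  note FTC = interval_integral_FTC_nonneg[where F = F and f = h and a = "ereal 0" and b = "ereal 1"
      and A = c and B = "1/2 * c"]
  have prem: "ereal 0 < ereal 1"
    "\<And>x. ereal 0 < ereal x \<Longrightarrow> ereal x < ereal 1 \<Longrightarrow> (F has_real_derivative h x) (at x)"
    "\<And>x. ereal 0 < ereal x \<Longrightarrow> ereal x < ereal 1 \<Longrightarrow> isCont h x"
    "AE x in lborel. ereal 0 < ereal x \<longrightarrow> ereal x < ereal 1 \<longrightarrow> 0 \<le> h x"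
    "((F \<circ> real_of_ereal) \<longlongrightarrow> c) (at_right (ereal 0))"
    "((F \<circ> real_of_ereal) \<longlongrightarrow> 1/2 * c) (at_left (ereal 1))"
    subgoal by simp
    subgoal using dF by auto
    subgoal using hcont by auto
    subgoal using hnn by (intro AE_I2) auto
    subgoal using F0 by (simp only: ereal_tendsto_simps1)
    subgoal using F1 by (simp only: ereal_tendsto_simps1)
    done
  have *: "set_integrable lborel (einterval (ereal 0) (ereal 1)) h"
      "(LBINT x=ereal 0..ereal 1. h x) = 1/2 * c - c"
    using FTC[OF prem] by auto
  have si: "set_integrable lborel {0<..<1} h" using *(1) by simp
  have "(LBINT x=ereal 0..ereal 1. h x) = (LINT x:{0<..<1}|lborel. h x)"
    by (simp add: interval_lebesgue_integral_def)
  also have "\<dots> = integral {0<..<1} h" by (rule set_borel_integral_eq_integral(2)[OF si])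
  finally have "(h has_integral (1/2 * c - c)) {0<..<1}"
    using *(2) set_borel_integral_eq_integral(1)[OF si] by (metis has_integral_integral)
  moreover have "1/2 * c - c = (1/2) * ln ((m + 1) / (p + 1))"
    using a0 b0 by (simp add: c_def a_def[symmetric] b_def[symmetric] ln_div) (simp add: field_simps)
  ultimately have "(h has_integral (1/2) * ln ((m + 1) / (p + 1))) {0<..<1}" by (simp only:)
  then show ?thesis unfolding h_def .
qed

theorem mainTheorem19:
  fixes m p :: real
  assumes "m > -1" and "p > -1"
  shows "((\<lambda>x. (x powr m - x powr p) /
            ((x powr (m + 1) + 1) * (x powr (p + 1) + 1) * ln x))
          has_integral (1/2) * ln ((m + 1) / (p + 1))) {0<..<1}"
proof (cases "p \<le> m")
  case True
  then show ?thesis using main_aux assms by blast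
next
  case False
  have "((\<lambda>x. (x powr p - x powr m) /
            ((x powr (p + 1) + 1) * (x powr (m + 1) + 1) * ln x))
          has_integral (1/2) * ln ((p + 1) / (m + 1))) {0<..<1}"
    using main_aux[of p m] assms False by auto
  note N = has_integral_neg[OF this]
  have eq1: "\<And>x::real. - ((x powr p - x powr m) / ((x powr (p + 1) + 1) * (x powr (m + 1) + 1) * ln x))
     = (x powr m - x powr p) / ((x powr (m + 1) + 1) * (x powr (p + 1) + 1) * ln x)"
    by (simp only: mult.commute[of "x powr (p+1) + 1" for x] minus_divide_left minus_diff_eq)
  have eq2: "- ((1/2) * ln ((p + 1) / (m + 1))) = (1/2) * ln ((m + 1) / (p + 1))"
    using assms by (simp add: ln_div) (simp add: field_simps)
  show ?thesis using N by (simp only: eq1 eq2)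
qed


end
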